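(* If $\Omega$ is an I-thick domain in $\mathbb{R}^n$ and $\partial\Omega$ satisfies the ball condition, then $\Omega$ is interior regular.
   Context: A domain is a non-empty open set; proper if $\ne\mathbb{R}^n$. $\mathcal{Q}(S)$ denotes the open axis-parallel cubes contained in $S$, $l(Q)$ the edge length. A proper domain $\Omega$ is I-thick if for any $c_1,c_2,c_3,c_4>0$ and $j_0\in\mathbb{N}$ there are $c_5,c_6,c_7,c_8>0$ such that for every $j\ge j_0$ and every $Q^e\in\mathcal{Q}(\Omega^c)$ with $c_12^{-j}\le l(Q^e)\le c_22^{-j}$ and $c_32^{-j}\le\operatorname{dist}(Q^e,\partial\Omega)\le c_42^{-j}$ there is $Q^i\in\mathcal{Q}(\Omega)$ with $c_52^{-j}\le l(Q^i)\le c_62^{-j}$ and $c_72^{-j}\le\operatorname{dist}(Q^i,\partial\Omega)\le\operatorname{dist}(Q^e,Q^i)\le c_82^{-j}$. A non-empty closed $S\subset\mathbb{R}^n$ satisfies the ball condition if there is $\eta\in(0,1)$ such that for every ball $B(x,r)$ with $x\in S$ and $r\in(0,1)$ there is a ball $B(y,\eta r)\subset B(x,r)$ with $B(y,\eta r)\cap S=\emptyset$. A domain $\Omega$ is interior regular if there is $c>0$ such that $|\Omega\cap Q|\ge c|Q|$ for every cube $Q$ with side length at most $1$ centred at a point of $\partial\Omega$. *)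

theory Defs
  imports "HOL-Analysis.Analysis"
begin

definition domain :: "'a::euclidean_space set \<Rightarrow> bool" where
  "domain \<Omega> \<longleftrightarrow> open \<Omega> \<and> \<Omega> \<noteq> {}"

definition proper_domain :: "'a::euclidean_space set \<Rightarrow> bool" where
  "proper_domain \<Omega> \<longleftrightarrow> domain \<Omega> \<and> \<Omega> \<noteq> UNIV"

definition is_cube :: "'a::euclidean_space set \<Rightarrow> real \<Rightarrow> bool" where
  "is_cube Q l \<longleftrightarrow> l > 0 \<and> (\<exists>a. Q = box a (a + l *\<^sub>R One))"

definition I_thick :: "'a::euclidean_space set \<Rightarrow> bool" where
  "I_thick \<Omega> \<longleftrightarrow> proper_domain \<Omega> \<and>
    (\<forall>c1 c2 c3 c4 :: real. c1 > 0 \<longrightarrow> c2 > 0 \<longrightarrow> c3 > 0 \<longrightarrow> c4 > 0 \<longrightarrow>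
     (\<forall>j0::nat. \<exists>c5 c6 c7 c8 :: real. c5 > 0 \<and> c6 > 0 \<and> c7 > 0 \<and> c8 > 0 \<and>
       (\<forall>j::nat. j \<ge> j0 \<longrightarrow>
         (\<forall>Qe le. is_cube Qe le \<and> Qe \<subseteq> - \<Omega> \<and>
             c1 / 2^j \<le> le \<and> le \<le> c2 / 2^j \<and>
             c3 / 2^j \<le> setdist Qe (frontier \<Omega>) \<and> setdist Qe (frontier \<Omega>) \<le> c4 / 2^j \<longrightarrow>
           (\<exists>Qi li. is_cube Qi li \<and> Qi \<subseteq> \<Omega> \<and>
             c5 / 2^j \<le> li \<and> li \<le> c6 / 2^j \<and>
             c7 / 2^j \<le> setdist Qi (frontier \<Omega>) \<and>
             setdist Qi (frontier \<Omega>) \<le> setdist Qe Qi \<and>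
             setdist Qe Qi \<le> c8 / 2^j)))))"

definition ball_condition :: "'a::euclidean_space set \<Rightarrow> bool" where
  "ball_condition S \<longleftrightarrow> S \<noteq> {} \<and> closed S \<and>
    (\<exists>\<eta>::real. 0 < \<eta> \<and> \<eta> < 1 \<and>
      (\<forall>x\<in>S. \<forall>r::real. 0 < r \<and> r < 1 \<longrightarrow>
         (\<exists>y. ball y (\<eta> * r) \<subseteq> ball x r \<and> ball y (\<eta> * r) \<inter> S = {})))"

definition centred_cube :: "'a::euclidean_space \<Rightarrow> real \<Rightarrow> 'a set" where
  "centred_cube x l = box (x - (l/2) *\<^sub>R One) (x + (l/2) *\<^sub>R One)"

definition interior_regular :: "'a::euclidean_space set \<Rightarrow> bool" where
  "interior_regular \<Omega> \<longleftrightarrow> domain \<Omega> \<and>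
    (\<exists>c::real. c > 0 \<and>
      (\<forall>x\<in>frontier \<Omega>. \<forall>l::real. 0 < l \<and> l \<le> 1 \<longrightarrow>
         measure lebesgue (\<Omega> \<inter> centred_cube x l) \<ge> c * measure lebesgue (centred_cube x l)))"

end

theory Submission
  imports Defs
begin

lemma cube_measure:
  fixes a :: "'a::euclidean_space"
  assumes "s > 0"
  shows "measure lebesgue (box a (a + s *\<^sub>R One)) = s ^ DIM('a)"
  using assms by (simp add: inner_add_left prod_constant)

lemma centred_cube_eq:
  "centred_cube x l = box (x - (l/2) *\<^sub>R One) ((x - (l/2) *\<^sub>R One) + l *\<^sub>R One)"
proof -
  have "x - (l/2) *\<^sub>R One + l *\<^sub>R One = x + (l/2) *\<^sub>R One"
    by (simp add: euclidean_eq_iff[where 'a='a] inner_add_left inner_diff_left)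
  then show ?thesis by (simp only: centred_cube_def)
qed

lemma box_dist:
  fixes a :: "'a::euclidean_space" and s :: real
  assumes "u \<in> box a (a + s *\<^sub>R One)" "v \<in> box a (a + s *\<^sub>R One)"
  shows "dist u v \<le> DIM('a) * s"
proof -
  have "dist u v \<le> (\<Sum>b\<in>Basis. \<bar>(u - v) \<bullet> b\<bar>)" by (simp add: dist_norm norm_le_l1)
  also have "\<dots> \<le> (\<Sum>b\<in>(Basis::'a set). (s::real))"
  proof (rule sum_mono)
    fix b :: 'a assume b: "b \<in> Basis"
    have "a \<bullet> b < u \<bullet> b" "u \<bullet> b < a \<bullet> b + s" "a \<bullet> b < v \<bullet> b" "v \<bullet> b < a \<bullet> b + s"
      using assms b by (auto simp: mem_box inner_add_left)
    then show "\<bar>(u - v) \<bullet> b\<bar> \<le> s" by (simp add: inner_diff_left abs_le_iff)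
  qed
  finally show ?thesis by simp
qed

lemma sym_box_sub_ball:
  fixes y :: "'a::euclidean_space" and s :: real
  assumes "s > 0"
  shows "box (y - s *\<^sub>R One) (y + s *\<^sub>R One) \<subseteq> ball y (DIM('a) * s)"
proof
  fix u assume u: "u \<in> box (y - s *\<^sub>R One) (y + s *\<^sub>R One)"
  have "dist y u \<le> (\<Sum>b\<in>Basis. \<bar>(y - u) \<bullet> b\<bar>)" by (simp add: dist_norm norm_le_l1)
  also have "\<dots> < (\<Sum>b\<in>(Basis::'a set). (s::real))"
  proof (rule sum_strict_mono)
    fix b :: 'a assume b: "b \<in> Basis"
    with u show "\<bar>(y - u) \<bullet> b\<bar> < s"
      by (auto simp: mem_box inner_add_left inner_diff_left abs_less_iff)
  qed auto
  finally show "u \<in> ball y (DIM('a) * s)" by simp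
qed

lemma ball_sub_centred:
  fixes x :: "'a::euclidean_space"
  assumes "r \<le> l/2"
  shows "ball x r \<subseteq> centred_cube x l"
proof
  fix u assume u: "u \<in> ball x r"
  have *: "\<bar>(u - x) \<bullet> b\<bar> < l/2" if b: "b \<in> Basis" for b
  proof -
    have "\<bar>(u - x) \<bullet> b\<bar> \<le> norm (u - x)" using b Basis_le_norm by blast
    also have "\<dots> < r" using u by (simp add: dist_norm norm_minus_commute)
    finally show ?thesis using assms by simp
  qed
  show "u \<in> centred_cube x l"
    unfolding centred_cube_def mem_box
  proof (intro ballI conjI)
    fix i :: 'a assume i: "i \<in> Basis"
    have "\<bar>u \<bullet> i - x \<bullet> i\<bar> < l/2" using *[OF i] by (simp add: inner_diff_left)
    then have "u \<bullet> i - x \<bullet> i < l/2" "x \<bullet> i - u \<bullet> i < l/2" by linarith+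
    then show "(x - (l / 2) *\<^sub>R One) \<bullet> i < u \<bullet> i" "u \<bullet> i < (x + (l / 2) *\<^sub>R One) \<bullet> i"
      using i by (simp_all add: inner_add_left inner_diff_left)
  qed
qed

lemma cube_in_lower:
  fixes Q :: "'a::euclidean_space set"
  assumes "is_cube Q li" "Q \<subseteq> \<Omega> \<inter> centred_cube x l" "open \<Omega>"
  shows "li ^ DIM('a) \<le> measure lebesgue (\<Omega> \<inter> centred_cube x l)"
proof -
  obtain a where a: "Q = box a (a + li *\<^sub>R One)" "li > 0" using assms(1) is_cube_def by blast
  have "li ^ DIM('a) = measure lebesgue Q" using a cube_measure by metis
  also have "\<dots> \<le> measure lebesgue (\<Omega> \<inter> centred_cube x l)"
  proof (rule measure_mono_fmeasurable[OF assms(2)])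
    show "Q \<in> sets lebesgue" using a by simp
    show "\<Omega> \<inter> centred_cube x l \<in> fmeasurable lebesgue"
      by (rule bounded_set_imp_lmeasurable)
        (auto simp: centred_cube_def assms(3) intro: bounded_Int borel_open)
  qed
  finally show ?thesis .
qed


lemma sym_box_eq:
  fixes y :: "'a::euclidean_space" and s :: real
  shows "box (y - s *\<^sub>R One) (y + s *\<^sub>R One) = box (y - s *\<^sub>R One) ((y - s *\<^sub>R One) + (2 * s) *\<^sub>R One)"
proof -
  have "y - s *\<^sub>R One + (2 * s) *\<^sub>R One = y + s *\<^sub>R One"
    by (simp add: euclidean_eq_iff[where 'a='a] inner_add_left inner_diff_left)
  then show ?thesis by (simp only:)
qed

lemma dyadic_scale:
  fixes r :: real
  assumes "0 < r" "r < 1"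
  obtains j :: nat where "1 / 2^j \<le> r" "r < 2 / 2^j"
proof -
  obtain k :: nat where k: "(1/2::real)^k < r" using real_arch_pow_inv[OF assms(1), of "1/2"] by auto
  define j where "j = (LEAST j::nat. 1/2^j \<le> r)"
  have ex: "1/2^k \<le> r" using k by (simp add: power_divide)
  have j1: "1/2^j \<le> r" unfolding j_def by (rule LeastI[of _ k]) (rule ex)
  have "j \<noteq> 0"
  proof
    assume "j = 0" with j1 assms show False by simp
  qed
  then obtain i where i: "j = Suc i" by (cases j) auto
  have "\<not> (1/2^i \<le> r)"
  proof
    assume "1/2^i \<le> r"
    then have "j \<le> i" unfolding j_def by (rule Least_le)
    then show False using i by simp
  qed
  then have "r < 2/2^j" using i by simp
  with j1 show ?thesis using that by blast
qed

lemma ball_side: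
  fixes \<Omega> :: "'a::euclidean_space set"
  assumes "ball y e \<inter> frontier \<Omega> = {}"
  shows "ball y e \<subseteq> \<Omega> \<or> ball y e \<subseteq> - \<Omega>"
  using connected_Int_frontier[of "ball y e" \<Omega>] assms by auto

theorem proposition5p10:
  fixes \<Omega> :: "'a::euclidean_space set"
  assumes "domain \<Omega>" and "I_thick \<Omega>" and "ball_condition (frontier \<Omega>)"
  shows "interior_regular \<Omega>"
proof -
  have opn: "open \<Omega>" using assms(1) domain_def by blast
  obtain \<eta> :: real where eta: "0 < \<eta>" "\<eta> < 1" and
    BC: "\<And>x r. x \<in> frontier \<Omega> \<Longrightarrow> 0 < r \<Longrightarrow> r < 1 \<Longrightarrow>
          \<exists>y. ball y (\<eta> * r) \<subseteq> ball x r \<and> ball y (\<eta> * r) \<inter> frontier \<Omega> = {}"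
    using assms(3) unfolding ball_condition_def by blast
  define d :: real where "d = real DIM('a)"
  have d1: "d \<ge> 1" unfolding d_def using DIM_positive[where 'a='a] by linarith
  define c1 where "c1 = \<eta> / (2 * d)"
  define c2 where "c2 = \<eta> / d"
  define c3 where "c3 = \<eta> / 2"
  define c4 :: real where "c4 = 2"
  have cpos: "c1 > 0" "c2 > 0" "c3 > 0" "c4 > 0"
    using eta d1 by (auto simp: c1_def c2_def c3_def c4_def)
  obtain c5 c6 c7 c8 :: real where c5: "c5 > 0" and c6: "c6 > 0" and c7: "c7 > 0" and c8: "c8 > 0" and
    T': "\<forall>j::nat. j \<ge> 0 \<longrightarrow>
         (\<forall>Qe le. is_cube Qe le \<and> Qe \<subseteq> - \<Omega> \<and>
             c1 / 2^j \<le> le \<and> le \<le> c2 / 2^j \<and>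
             c3 / 2^j \<le> setdist Qe (frontier \<Omega>) \<and> setdist Qe (frontier \<Omega>) \<le> c4 / 2^j \<longrightarrow>
           (\<exists>Qi li. is_cube Qi li \<and> Qi \<subseteq> \<Omega> \<and>
             c5 / 2^j \<le> li \<and> li \<le> c6 / 2^j \<and>
             c7 / 2^j \<le> setdist Qi (frontier \<Omega>) \<and>
             setdist Qi (frontier \<Omega>) \<le> setdist Qe Qi \<and>
             setdist Qe Qi \<le> c8 / 2^j))"
    using assms(2)[unfolded I_thick_def, THEN conjunct2, rule_format, OF cpos, of 0]
    by (elim exE conjE) (rule that)
  note T = T'[rule_format]
  define K where "K = 2 * (3 + c8 + d * c6)"
  have K6: "K > 6" unfolding K_def using c8 c6 d1 by (simp add: add_pos_pos)
  define c where "c = min ((\<eta> / (d * K)) ^ DIM('a)) ((c5 / (2 * K)) ^ DIM('a))"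
  have cp: "c > 0" unfolding c_def using eta d1 K6 c5 by auto
  have main: "c * measure lebesgue (centred_cube x l) \<le> measure lebesgue (\<Omega> \<inter> centred_cube x l)"
    if x: "x \<in> frontier \<Omega>" and l: "0 < l" "l \<le> 1" for x l
  proof -
    have mc: "measure lebesgue (centred_cube x l) = l ^ DIM('a)"
      using centred_cube_eq[of x l] cube_measure[OF l(1)] by metis
    define r where "r = l / K"
    have r0: "0 < r" and r1: "r < 1" and rl: "r \<le> l/2" and lr: "l = K * r"
      using l K6 by (auto simp: r_def field_simps)
    obtain j :: nat where j: "1/2^j \<le> r" "r < 2/2^j" using dyadic_scale[OF r0 r1] by blast
    define t :: real where "t = 1/2^j"
    have t0: "t > 0" and tr: "t \<le> r" and rt: "r < 2 * t" using j by (auto simp: t_def)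
    have tdiv: "\<And>a. a / 2^j = a * t" by (simp add: t_def)
    obtain y where y1: "ball y (\<eta> * r) \<subseteq> ball x r" and y2: "ball y (\<eta> * r) \<inter> frontier \<Omega> = {}"
      using BC[OF x r0 r1] by blast
    have ery: "\<eta> * r > 0" using eta r0 by simp
    have yx: "dist x y < r" using y1 ery by (auto simp: subset_eq)
    have cc: "ball x r \<subseteq> centred_cube x l" using ball_sub_centred[OF rl] .
    have ld: "l ^ DIM('a) \<ge> 0" using l by simp
    obtain Q li where Q: "is_cube Q li" "Q \<subseteq> \<Omega> \<inter> centred_cube x l" and
      lic: "c * l ^ DIM('a) \<le> li ^ DIM('a)"
    proof (cases "ball y (\<eta> * r) \<subseteq> \<Omega>")
      case True
      define s where "s = \<eta> * r / (2 * d)"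
      have s0: "s > 0" using ery d1 by (simp add: s_def)
      have ds: "d * s = \<eta> * r / 2" using d1 by (simp add: s_def)
      have eq: "box (y - s *\<^sub>R One) (y + s *\<^sub>R One) = box (y - s *\<^sub>R One) ((y - s *\<^sub>R One) + (2 * s) *\<^sub>R One)"
        by (rule sym_box_eq)
      have sub: "box (y - s *\<^sub>R One) (y + s *\<^sub>R One) \<subseteq> ball y (\<eta> * r)"
        using sym_box_sub_ball[OF s0, of y] ds ery unfolding d_def by auto
      have "is_cube (box (y - s *\<^sub>R One) (y + s *\<^sub>R One)) (2 * s)"
        unfolding is_cube_def using s0 eq by auto
      moreover have "box (y - s *\<^sub>R One) (y + s *\<^sub>R One) \<subseteq> \<Omega> \<inter> centred_cube x l"
        using sub True y1 cc by blast
      moreover have "c * l ^ DIM('a) \<le> (2 * s) ^ DIM('a)"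
      proof -
        have "2 * s = (\<eta> / (d * K)) * l" using d1 K6 by (simp add: s_def lr field_simps)
        then have "(2 * s) ^ DIM('a) = (\<eta> / (d * K)) ^ DIM('a) * l ^ DIM('a)" by (metis power_mult_distrib)
        moreover have "c \<le> (\<eta> / (d * K)) ^ DIM('a)" unfolding c_def by simp
        ultimately show ?thesis using ld by (simp add: mult_right_mono)
      qed
      ultimately show ?thesis using that by blast
    next
      case False
      then have ext: "ball y (\<eta> * r) \<subseteq> - \<Omega>" using ball_side[OF y2] by blast
      define s where "s = \<eta> * r / (4 * d)"
      have s0: "s > 0" using ery d1 by (simp add: s_def)
      have ds: "d * s = \<eta> * r / 4" using d1 by (simp add: s_def)
      define Qe where "Qe = box (y - s *\<^sub>R One) (y + s *\<^sub>R One)"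
      have eq: "Qe = box (y - s *\<^sub>R One) ((y - s *\<^sub>R One) + (2 * s) *\<^sub>R One)"
        unfolding Qe_def by (rule sym_box_eq)
      have subQe: "Qe \<subseteq> ball y (\<eta> * r / 4)"
        using sym_box_sub_ball[OF s0, of y] ds unfolding d_def Qe_def by auto
      have yQe: "y \<in> Qe" using s0 by (simp add: Qe_def mem_box inner_add_left inner_diff_left)
      have cubeQe: "is_cube Qe (2 * s)" unfolding is_cube_def using s0 eq by auto
      have "ball y (\<eta> * r / 4) \<subseteq> ball y (\<eta> * r)" using ery by (intro subset_ball) simp
      then have Qeext: "Qe \<subseteq> - \<Omega>" using subQe ext by blast
      have b1: "c1 / 2^j \<le> 2 * s" unfolding tdiv c1_def s_def using tr d1 eta
        by (simp add: field_simps mult_left_mono)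
      have b2: "2 * s \<le> c2 / 2^j" unfolding tdiv c2_def s_def using rt d1 eta
        by (simp add: field_simps mult_left_mono)
      have b3: "c3 / 2^j \<le> setdist Qe (frontier \<Omega>)"
      proof (rule le_setdistI)
        show "Qe \<noteq> {}" using yQe by blast
        show "frontier \<Omega> \<noteq> {}" using x by blast
        fix p z assume p: "p \<in> Qe" and z: "z \<in> frontier \<Omega>"
        have "z \<notin> ball y (\<eta> * r)" using y2 z by blast
        then have "dist y z \<ge> \<eta> * r" by simp
        moreover have "dist y p < \<eta> * r / 4" using subQe p by auto
        moreover have "dist y z \<le> dist y p + dist p z" by (rule dist_triangle)
        moreover have "c3 / 2^j \<le> \<eta> * r / 2" unfolding tdiv c3_def using tr eta by simp
        ultimately show "c3 / 2^j \<le> dist p z" using ery by linarith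
      qed
      have b4: "setdist Qe (frontier \<Omega>) \<le> c4 / 2^j"
      proof -
        have "setdist Qe (frontier \<Omega>) \<le> dist y x" by (rule setdist_le_dist[OF yQe x])
        also have "\<dots> \<le> c4 / 2^j" unfolding tdiv c4_def using yx rt by (simp add: dist_commute)
        finally show ?thesis .
      qed
      obtain Qi li where Qi: "is_cube Qi li" "Qi \<subseteq> \<Omega>" "c5 / 2^j \<le> li" "li \<le> c6 / 2^j"
        "setdist Qe Qi \<le> c8 / 2^j"
        using T[OF _ conjI[OF cubeQe conjI[OF Qeext conjI[OF b1 conjI[OF b2 conjI[OF b3 b4]]]]]] by auto
      obtain a where a: "Qi = box a (a + li *\<^sub>R One)" "li > 0" using Qi(1) is_cube_def by blast
      have "a + (li/2) *\<^sub>R One \<in> Qi" using a by (simp add: mem_box inner_add_left)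
      then have Qine: "Qi \<noteq> {}" by blast
      obtain p q where p: "p \<in> Qe" and q: "q \<in> Qi" and pq: "dist p q < (c8 + 1) * t"
      proof (rule setdist_ltE[of Qe Qi "(c8 + 1) * t"])
        show "setdist Qe Qi < (c8 + 1) * t" using Qi(5) t0 unfolding tdiv by (simp add: algebra_simps)
      qed (use yQe Qine in auto)
      have "Qi \<subseteq> ball x (l/2)"
      proof
        fix z assume z: "z \<in> Qi"
        have "dist q z \<le> d * li" using box_dist[of q a li z] q z a unfolding d_def by simp
        also have "\<dots> \<le> d * (c6 * t)" using Qi(4) d1 unfolding tdiv by simp
        finally have qz: "dist q z \<le> d * c6 * t" by simp
        have "\<eta> * r \<le> 1 * r" using eta r0 by (intro mult_right_mono) auto
        then have er: "\<eta> * r / 4 \<le> r" using r0 by simp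
        have yp: "dist y p < \<eta> * r / 4" using subQe p by auto
        have "dist x z \<le> dist x y + dist y p + dist p q + dist q z"
          using dist_triangle[of x z y] dist_triangle[of y z p] dist_triangle[of p z q] by linarith
        also have "\<dots> < r + r + (c8 + 1) * t + d * c6 * t"
          using yx yp pq qz er by linarith
        also have "\<dots> \<le> r + r + (c8 + 1) * r + d * c6 * r"
          using tr c8 c6 d1 by (intro add_mono mult_left_mono) auto
        also have "\<dots> = l / 2" unfolding lr K_def by (simp add: algebra_simps)
        finally show "z \<in> ball x (l/2)" by simp
      qed
      then have "Qi \<subseteq> \<Omega> \<inter> centred_cube x l" using Qi(2) ball_sub_centred[of "l/2" l x] by auto
      moreover have "c * l ^ DIM('a) \<le> li ^ DIM('a)"
      proof -
        have "(c5 / (2 * K)) * l \<le> li"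
        proof -
          have "(c5 / (2 * K)) * l = c5 * r / 2" using K6 by (simp add: lr field_simps)
          also have "\<dots> \<le> c5 * t" using rt c5 by simp
          also have "\<dots> \<le> li" using Qi(3) unfolding tdiv .
          finally show ?thesis .
        qed
        then have "((c5 / (2 * K)) * l) ^ DIM('a) \<le> li ^ DIM('a)"
          using c5 K6 l by (intro power_mono) auto
        moreover have "c \<le> (c5 / (2 * K)) ^ DIM('a)" unfolding c_def by simp
        ultimately show ?thesis using ld
          by (metis (no_types, lifting) mult_right_mono order_trans power_mult_distrib)
      qed
      ultimately show ?thesis using that Qi(1) by blast
    qed
    have "li ^ DIM('a) \<le> measure lebesgue (\<Omega> \<inter> centred_cube x l)"
      by (rule cube_in_lower[OF Q opn])
    then show ?thesis using lic mc by simp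
  qed
  show ?thesis unfolding interior_regular_def using assms(1) cp main by blast
qed

end
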